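(* $\overline{\mathcal M}_2=\mathcal M_2$; that is, every matroid with a real representation as a $2$-modular matrix also has a real representation as a totally $2$-modular matrix.
   Context: An integer matrix $A$ is $\Delta$-modular if the determinant of every $\operatorname{rank}(A)\times\operatorname{rank}(A)$ submatrix has absolute value at most $\Delta$, and totally $\Delta$-modular if the determinant of every square submatrix has absolute value at most $\Delta$. $\mathcal M_\Delta$ (resp. $\overline{\mathcal M}_\Delta$) is the class of matroids isomorphic to the real vector matroid of the columns of some $\Delta$-modular (resp. totally $\Delta$-modular) matrix. *)

theory Defs
  imports "Jordan_Normal_Form.Determinant" "Jordan_Normal_Form.DL_Submatrix"
begin

definition cols_indep_real :: "int mat \<Rightarrow> nat set \<Rightarrow> bool" where
  "cols_indep_real A S \<longleftrightarrow> S \<subseteq> {..<dim_col A} \<and>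
     (\<forall>c :: nat \<Rightarrow> real.
        (\<forall>i<dim_row A. (\<Sum>j\<in>S. c j * real_of_int (A $$ (i, j))) = 0) \<longrightarrow>
        (\<forall>j\<in>S. c j = 0))"

definition real_rank :: "int mat \<Rightarrow> nat" where
  "real_rank A = Max (card ` {S. cols_indep_real A S})"

definition square_subsets :: "int mat \<Rightarrow> nat \<Rightarrow> (nat set \<times> nat set) set" where
  "square_subsets A k = {(I, J). I \<subseteq> {..<dim_row A} \<and> J \<subseteq> {..<dim_col A}
                                  \<and> card I = k \<and> card J = k}"

definition Delta_modular :: "int \<Rightarrow> int mat \<Rightarrow> bool" where
  "Delta_modular \<Delta> A \<longleftrightarrow>
     (\<forall>(I, J) \<in> square_subsets A (real_rank A). \<bar>det (submatrix A I J)\<bar> \<le> \<Delta>)"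

definition totally_Delta_modular :: "int \<Rightarrow> int mat \<Rightarrow> bool" where
  "totally_Delta_modular \<Delta> A \<longleftrightarrow>
     (\<forall>k. \<forall>(I, J) \<in> square_subsets A k. \<bar>det (submatrix A I J)\<bar> \<le> \<Delta>)"

definition iso_vector_matroid :: "'a set \<Rightarrow> ('a set \<Rightarrow> bool) \<Rightarrow> int mat \<Rightarrow> bool" where
  "iso_vector_matroid E indep A \<longleftrightarrow>
     (\<exists>f. bij_betw f E {..<dim_col A} \<and>
          (\<forall>X \<subseteq> E. indep X \<longleftrightarrow> cols_indep_real A (f ` X)))"

definition in_M :: "int \<Rightarrow> 'a set \<Rightarrow> ('a set \<Rightarrow> bool) \<Rightarrow> bool" where
  "in_M \<Delta> E indep \<longleftrightarrow> (\<exists>A. Delta_modular \<Delta> A \<and> iso_vector_matroid E indep A)"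

definition in_Mbar :: "int \<Rightarrow> 'a set \<Rightarrow> ('a set \<Rightarrow> bool) \<Rightarrow> bool" where
  "in_Mbar \<Delta> E indep \<longleftrightarrow> (\<exists>A. totally_Delta_modular \<Delta> A \<and> iso_vector_matroid E indep A)"

end

theory Submission
  imports Defs
begin


definition smf :: "(nat \<Rightarrow> nat \<Rightarrow> 'a) \<Rightarrow> (nat \<Rightarrow> nat) \<Rightarrow> (nat \<Rightarrow> nat) \<Rightarrow> nat \<Rightarrow> 'a mat" where
  "smf F f g k = mat k k (\<lambda>(i,j). F (f i) (g j))"

lemma smf_carrier[simp]: "smf F f g k \<in> carrier_mat k k"
  and smf_dim[simp]: "dim_row (smf F f g k) = k" "dim_col (smf F f g k) = k"
  by (auto simp: smf_def)

lemma smf_index[simp]: "i < k \<Longrightarrow> j < k \<Longrightarrow> smf F f g k $$ (i,j) = F (f i) (g j)"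
  by (simp add: smf_def)

lemma det_nonzero_iff_kernel:
  fixes M :: "nat \<Rightarrow> nat \<Rightarrow> 'a::field"
  shows "det (smf M f g r) \<noteq> 0 \<longleftrightarrow>
    (\<forall>x. (\<forall>i<r. (\<Sum>j<r. M (f i) (g j) * x j) = 0) \<longrightarrow> (\<forall>j<r. x j = 0))"
proof -
  have e: "(smf M f g r *\<^sub>v v) $ i = (\<Sum>j<r. M (f i) (g j) * v $ j)" if "i < r" "v \<in> carrier_vec r" for v i
    using that by (simp add: scalar_prod_def row_def atLeast0LessThan)
  have e2: "(smf M f g r *\<^sub>v vec r x) $ i = (\<Sum>j<r. M (f i) (g j) * x j)" if "i < r" for x i
    using that by (simp add: scalar_prod_def row_def atLeast0LessThan)
  show ?thesis
  proof
    assume d: "det (smf M f g r) \<noteq> 0"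
    show "\<forall>x. (\<forall>i<r. (\<Sum>j<r. M (f i) (g j) * x j) = 0) \<longrightarrow> (\<forall>j<r. x j = 0)"
    proof (intro allI impI)
      fix x j assume h: "\<forall>i<r. (\<Sum>j<r. M (f i) (g j) * x j) = 0" and j: "j < r"
      let ?v = "vec r x"
      have "smf M f g r *\<^sub>v ?v = 0\<^sub>v r"
      proof (rule eq_vecI)
        fix i assume "i < dim_vec (0\<^sub>v r :: 'a vec)"
        hence i: "i < r" by simp
        show "(smf M f g r *\<^sub>v ?v) $ i = 0\<^sub>v r $ i" unfolding e2[OF i] using h i by simp
      qed simp
      moreover have "?v \<in> carrier_vec r" by simp
      ultimately have "?v = 0\<^sub>v r" using d det_0_iff_vec_prod_zero_field[OF smf_carrier, of M f g r] by blast
      hence "?v $ j = 0" using j by simp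
      thus "x j = 0" using j by simp
    qed
  next
    assume h: "\<forall>x. (\<forall>i<r. (\<Sum>j<r. M (f i) (g j) * x j) = 0) \<longrightarrow> (\<forall>j<r. x j = 0)"
    show "det (smf M f g r) \<noteq> 0"
    proof
      assume "det (smf M f g r) = 0"
      then obtain v where v: "v \<in> carrier_vec r" "v \<noteq> 0\<^sub>v r" "smf M f g r *\<^sub>v v = 0\<^sub>v r"
        using det_0_iff_vec_prod_zero_field[OF smf_carrier, of M f g r] by auto
      have "\<forall>i<r. (\<Sum>j<r. M (f i) (g j) * v $ j) = 0"
      proof (intro allI impI)
        fix i assume "i < r"
        have "(smf M f g r *\<^sub>v v) $ i = 0" using v(3) \<open>i<r\<close> by simp
        thus "(\<Sum>j<r. M (f i) (g j) * v $ j) = 0" using e[OF \<open>i<r\<close> v(1)] by simp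
      qed
      hence "\<forall>j<r. v $ j = 0" using h[rule_format, of "\<lambda>j. v $ j"] by blast
      hence "v = 0\<^sub>v r" using v(1) by (intro eq_vecI) auto
      thus False using v(2) by simp
    qed
  qed
qed

lemma wide_kernel:
  fixes X :: "nat \<Rightarrow> nat \<Rightarrow> 'a::field"
  assumes rs: "r < s"
  shows "\<exists>y. (\<exists>j<s. y j \<noteq> 0) \<and> (\<forall>i<r. (\<Sum>j<s. X i j * y j) = 0)"
proof -
  define X' where "X' = (\<lambda>i j. if i < r then X i j else (0::'a))"
  have "det (smf X' id id s) = 0"
  proof -
    have "(\<Prod>i\<in>{0..<s}. smf X' id id s $$ (i, p i)) = 0" if p: "p permutes {0..<s}" for p
    proof (rule prod_zero)
      show "finite {0..<s}" by simp
      have "p r < s" using p rs by (meson atLeastLessThan_iff le0 permutes_in_image)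
      thus "\<exists>a\<in>{0..<s}. smf X' id id s $$ (a, p a) = 0" using rs by (intro bexI[of _ r], auto simp: X'_def)
    qed
    thus ?thesis unfolding det_def'[OF smf_carrier] by (intro sum.neutral) auto
  qed
  then obtain x where x: "\<forall>i<s. (\<Sum>j<s. X' i j * x j) = 0" "\<not> (\<forall>j<s. x j = 0)"
    using det_nonzero_iff_kernel[of X' id id s] by auto
  have "\<forall>i<r. (\<Sum>j<s. X i j * x j) = 0"
  proof (intro allI impI)
    fix i assume i: "i < r"
    hence "i < s" using rs by simp
    from x(1)[rule_format, OF this] i show "(\<Sum>j<s. X i j * x j) = 0" by (simp add: X'_def)
  qed
  thus ?thesis using x(2) by blast
qed




lemma pick_bij:
  assumes "finite S"
  shows "bij_betw (pick S) {..<card S} S"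
  unfolding bij_betw_def
proof
  show "inj_on (pick S) {..<card S}"
  proof (rule inj_onI)
    fix a b assume "a \<in> {..<card S}" "b \<in> {..<card S}" "pick S a = pick S b"
    show "a = b"
    proof (rule ccontr)
      assume "a \<noteq> b"
      hence "a < b \<or> b < a" by arith
      thus False
      proof
        assume "a < b" hence "pick S a < pick S b" using pick_mono[of b S a] \<open>b \<in> {..<card S}\<close> by simp
        thus False using \<open>pick S a = pick S b\<close> by simp
      next
        assume "b < a" hence "pick S b < pick S a" using pick_mono[of a S b] \<open>a \<in> {..<card S}\<close> by simp
        thus False using \<open>pick S a = pick S b\<close> by simp
      qed
    qed
  qed
  show "pick S ` {..<card S} = S"
  proof
    show "pick S ` {..<card S} \<subseteq> S"
    proof (rule image_subsetI)
      fix a assume "a \<in> {..<card S}" thus "pick S a \<in> S" using pick_in_set[of a S] by simp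
    qed
    show "S \<subseteq> pick S ` {..<card S}"
    proof
      fix i assume i: "i \<in> S"
      have "{a\<in>S. a < i} \<subset> S" using i by auto
      hence "card {a\<in>S. a < i} < card S" using assms by (simp add: psubset_card_mono)
      hence "card {a\<in>S. a < i} \<in> {..<card S}" by simp
      moreover have "i = pick S (card {a\<in>S. a < i})" by (rule pick_card_in_set[OF i, symmetric])
      ultimately show "i \<in> pick S ` {..<card S}" by (rule rev_image_eqI)
    qed
  qed
qed

lemma pick_bij': "finite S \<Longrightarrow> card S = k \<Longrightarrow> bij_betw (pick S) {..<k} S"
  using pick_bij by blast

lemma perm_exists:
  fixes k :: nat
  assumes f: "bij_betw f {..<k} I" and h: "bij_betw h {..<k} I"
  shows "\<exists>p. p permutes {0..<k} \<and> (\<forall>i<k. f i = h (p i))"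
proof -
  define p where "p = (\<lambda>i. if i < k then inv_into {..<k} h (f i) else i)"
  have b1: "bij_betw (inv_into {..<k} h \<circ> f) {..<k} {..<k}"
    using bij_betw_trans[OF f bij_betw_inv_into[OF h]] .
  have "bij_betw p {..<k} {..<k}"
    by (rule bij_betw_cong[THEN iffD1, OF _ b1], auto simp: p_def)
  hence "p permutes {..<k}" by (rule bij_imp_permutes) (auto simp: p_def)
  moreover have "\<forall>i<k. f i = h (p i)"
  proof (intro allI impI)
    fix i assume i: "i < k"
    have "f i \<in> I" using f i by (auto simp: bij_betw_def)
    hence "f i \<in> h ` {..<k}" using h by (auto simp: bij_betw_def)
    thus "f i = h (p i)" using i by (simp add: p_def f_inv_into_f)
  qed
  moreover have "{..<k} = {0..<k}" by auto
  ultimately show ?thesis by metis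
qed

lemma det_smf_perm_rows:
  assumes p: "p permutes {0..<k}"
  shows "det (smf F (h \<circ> p) g k) = signof p * det (smf F h g k)"
proof -
  have "smf F (h \<circ> p) g k = mat k k (\<lambda>(i,j). smf F h g k $$ (p i, j))"
  proof (rule eq_matI)
    fix i j assume "i < dim_row (mat k k (\<lambda>(i,j). smf F h g k $$ (p i, j)))"
       "j < dim_col (mat k k (\<lambda>(i,j). smf F h g k $$ (p i, j)))"
    hence ij: "i < k" "j < k" by auto
    have "p i < k" using p ij by (meson atLeastLessThan_iff le0 permutes_in_image)
    thus "smf F (h \<circ> p) g k $$ (i, j) = mat k k (\<lambda>(i,j). smf F h g k $$ (p i, j)) $$ (i, j)"
      using ij by simp
  qed auto
  thus ?thesis using det_permute_rows[OF smf_carrier p] by simp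
qed

lemma transpose_smf: "transpose_mat (smf F f g k) = smf (\<lambda>a b. F b a) g f k"
  by (rule eq_matI) auto

lemma det_smf_perm_cols:
  assumes p: "p permutes {0..<k}"
  shows "det (smf F f (h \<circ> p) k) = signof p * det (smf F f h k)"
proof -
  have "det (smf F f (h \<circ> p) k) = det (smf (\<lambda>a b. F b a) (h \<circ> p) f k)"
    using det_transpose[OF smf_carrier, of F f "h \<circ> p" k] by (simp add: transpose_smf)
  also have "\<dots> = signof p * det (smf (\<lambda>a b. F b a) h f k)" by (rule det_smf_perm_rows[OF p])
  also have "det (smf (\<lambda>a b. F b a) h f k) = det (smf F f h k)"
    using det_transpose[OF smf_carrier, of F f h k] by (simp add: transpose_smf)
  finally show ?thesis .
qed

lemma abs_signof: "\<bar>(signof p :: 'a :: linordered_idom)\<bar> = 1"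
  by (cases p rule: sign_cases) auto

lemma smf_cong: "(\<And>i. i < k \<Longrightarrow> f i = f' i) \<Longrightarrow> (\<And>j. j < k \<Longrightarrow> g j = g' j) \<Longrightarrow> smf F f g k = smf F f' g' k"
  by (rule eq_matI) auto

lemma det_smf_abs:
  fixes F :: "nat \<Rightarrow> nat \<Rightarrow> 'a :: linordered_idom"
  assumes "bij_betw f {..<k} I" "bij_betw f' {..<k} I" "bij_betw g {..<k} J" "bij_betw g' {..<k} J"
  shows "\<bar>det (smf F f g k)\<bar> = \<bar>det (smf F f' g' k)\<bar>"
proof -
  obtain p where p: "p permutes {0..<k}" "\<forall>i<k. f i = f' (p i)" using perm_exists[OF assms(1,2)] by blast
  obtain q where q: "q permutes {0..<k}" "\<forall>i<k. g i = g' (q i)" using perm_exists[OF assms(3,4)] by blast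
  have "smf F f g k = smf F (f' \<circ> p) (g' \<circ> q) k" by (rule smf_cong) (use p q in auto)
  hence "det (smf F f g k) = signof p * (signof q * det (smf F f' g' k))"
    using det_smf_perm_rows[OF p(1), of F f' "g' \<circ> q"] det_smf_perm_cols[OF q(1), of F f' g'] by simp
  hence "\<bar>det (smf F f g k)\<bar> = \<bar>signof p :: 'a\<bar> * (\<bar>signof q :: 'a\<bar> * \<bar>det (smf F f' g' k)\<bar>)"
    by (simp only: abs_mult)
  thus ?thesis by (simp only: abs_signof mult_1)
qed

lemma submatrix_smf:
  assumes "I \<subseteq> {..<dim_row A}" "J \<subseteq> {..<dim_col A}" "card I = k" "card J = k"
  shows "submatrix A I J = smf (\<lambda>i j. A $$ (i,j)) (pick I) (pick J) k"
proof -
  have "{i. i < dim_row A \<and> i \<in> I} = I" "{j. j < dim_col A \<and> j \<in> J} = J" using assms by auto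
  thus ?thesis unfolding submatrix_def smf_def using assms by simp
qed

lemma smf_map: "map_mat h (smf F f g k) = smf (\<lambda>i j. h (F i j)) f g k"
  by (rule eq_matI) auto




lemma row_select:
  fixes M :: "nat \<Rightarrow> nat \<Rightarrow> 'a::field"
  assumes K: "\<forall>x. (\<forall>i<m. (\<Sum>b<r. M i b * x b) = 0) \<longrightarrow> (\<forall>b<r. x b = 0)"
  shows "\<exists>I. I \<subseteq> {..<m} \<and> card I = r \<and> det (smf M (pick I) id r) \<noteq> 0"
proof -
  define P where "P R \<longleftrightarrow> R \<subseteq> {..<m} \<and> (\<forall>x. (\<forall>i\<in>R. (\<Sum>b<r. M i b * x b) = 0) \<longrightarrow> (\<forall>b<r. x b = 0))" for R
  have "P {..<m}" using K unfolding P_def by auto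
  then obtain R where PR: "P R" and minR: "\<forall>R'. P R' \<longrightarrow> card R \<le> card R'"
    using ex_has_least_nat[of P "{..<m}" card] by blast
  have Rsub: "R \<subseteq> {..<m}" and RK: "\<forall>x. (\<forall>i\<in>R. (\<Sum>b<r. M i b * x b) = 0) \<longrightarrow> (\<forall>b<r. x b = 0)"
    using PR unfolding P_def by auto
  have finR: "finite R" using Rsub finite_subset by blast
  define s where "s = card R"
  define f where "f = pick R"
  have bij: "bij_betw f {..<s} R" unfolding f_def s_def by (rule pick_bij[OF finR])
  have fR: "\<And>a. a < s \<Longrightarrow> f a \<in> R" using bij by (auto simp: bij_betw_def)
  have Rf: "\<And>i. i \<in> R \<Longrightarrow> \<exists>a<s. i = f a" using bij unfolding bij_betw_def by auto
  have finj: "\<And>a a'. a < s \<Longrightarrow> a' < s \<Longrightarrow> f a = f a' \<Longrightarrow> a = a'"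
    using bij unfolding bij_betw_def inj_on_def by auto
  have c1: "\<not> s < r"
  proof
    assume "s < r"
    from wide_kernel[OF this, of "\<lambda>a b. M (f a) b"] obtain y where
      y: "\<exists>j<r. y j \<noteq> 0" "\<forall>a<s. (\<Sum>b<r. M (f a) b * y b) = 0" by blast
    have "\<forall>i\<in>R. (\<Sum>b<r. M i b * y b) = 0"
    proof
      fix i assume "i \<in> R"
      then obtain a where "a < s" "i = f a" using Rf by blast
      thus "(\<Sum>b<r. M i b * y b) = 0" using y(2) by simp
    qed
    hence "\<forall>b<r. y b = 0" using RK by blast
    thus False using y(1) by blast
  qed
  have c2: "\<not> r < s"
  proof
    assume rs: "r < s"
    have ex: "\<exists>x. (\<forall>l\<in>R - {i}. (\<Sum>b<r. M l b * x b) = 0) \<and> (\<exists>b<r. x b \<noteq> 0)" if i: "i \<in> R" for i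
    proof -
      have "card (R - {i}) < card R" by (rule card_Diff1_less[OF finR i])
      hence "\<not> P (R - {i})" using minR by force
      moreover have "R - {i} \<subseteq> {..<m}" using Rsub by auto
      ultimately show ?thesis unfolding P_def by blast
    qed
    define xx where "xx i = (SOME x. (\<forall>l\<in>R - {i}. (\<Sum>b<r. M l b * x b) = 0) \<and> (\<exists>b<r. x b \<noteq> 0))" for i
    have xx1: "\<And>i l. i \<in> R \<Longrightarrow> l \<in> R - {i} \<Longrightarrow> (\<Sum>b<r. M l b * xx i b) = 0"
      and xx2: "\<And>i. i \<in> R \<Longrightarrow> \<exists>b<r. xx i b \<noteq> 0"
      using someI_ex[OF ex] unfolding xx_def by blast+
    have xx3: "(\<Sum>b<r. M i b * xx i b) \<noteq> 0" if i: "i \<in> R" for i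
    proof
      assume "(\<Sum>b<r. M i b * xx i b) = 0"
      hence "\<forall>l\<in>R. (\<Sum>b<r. M l b * xx i b) = 0" using xx1[OF i] by blast
      hence "\<forall>b<r. xx i b = 0" using RK by blast
      thus False using xx2[OF i] by blast
    qed
    from wide_kernel[OF rs, of "\<lambda>b a. xx (f a) b"] obtain y where
      y: "\<exists>a<s. y a \<noteq> 0" "\<forall>b<r. (\<Sum>a<s. xx (f a) b * y a) = 0" by blast
    then obtain a0 where a0: "a0 < s" "y a0 \<noteq> 0" by blast
    have "0 = (\<Sum>b<r. M (f a0) b * (\<Sum>a<s. xx (f a) b * y a))" using y(2) by simp
    also have "\<dots> = (\<Sum>a<s. y a * (\<Sum>b<r. M (f a0) b * xx (f a) b))"
      by (simp add: sum_distrib_left sum.swap[of _ "{..<r}"] mult_ac)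
    also have "\<dots> = (\<Sum>a\<in>{a0}. y a * (\<Sum>b<r. M (f a0) b * xx (f a) b))"
    proof (rule sum.mono_neutral_right)
      show "\<forall>a\<in>{..<s} - {a0}. y a * (\<Sum>b<r. M (f a0) b * xx (f a) b) = 0"
      proof
        fix a assume a: "a \<in> {..<s} - {a0}"
        hence "f a0 \<in> R - {f a}" using fR a0 finj by auto
        thus "y a * (\<Sum>b<r. M (f a0) b * xx (f a) b) = 0" using xx1[OF fR] a by auto
      qed
    qed (use a0 in auto)
    also have "\<dots> = y a0 * (\<Sum>b<r. M (f a0) b * xx (f a0) b)" by simp
    finally have "y a0 * (\<Sum>b<r. M (f a0) b * xx (f a0) b) = 0" by simp
    thus False using a0 xx3[OF fR[OF a0(1)]] by simp
  qed
  have sr: "s = r" using c1 c2 by simp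
  have "det (smf M f id r) \<noteq> 0"
    unfolding det_nonzero_iff_kernel
  proof (intro allI impI)
    fix x j assume h: "\<forall>i<r. (\<Sum>j<r. M (f i) (id j) * x j) = 0" and j: "j < r"
    have "\<forall>i\<in>R. (\<Sum>b<r. M i b * x b) = 0"
    proof
      fix i assume "i \<in> R"
      then obtain a where "a < s" "i = f a" using Rf by blast
      thus "(\<Sum>b<r. M i b * x b) = 0" using h sr by simp
    qed
    thus "x j = 0" using RK j by blast
  qed
  thus ?thesis using Rsub sr unfolding s_def f_def by blast
qed




lemma bij_combine:
  fixes k l :: nat
  assumes f: "bij_betw f {..<k} P" and h: "bij_betw h {..<l} Q" and PQ: "P \<inter> Q = {}"
  shows "bij_betw (\<lambda>a. if a < k then f a else h (a - k)) {..<k+l} (P \<union> Q)"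
proof -
  have s: "bij_betw (\<lambda>a. a - k) {k..<k+l} {..<l}"
    by (rule bij_betwI[of _ _ _ "\<lambda>a. a + k"]) auto
  have h': "bij_betw (\<lambda>a. h (a - k)) {k..<k+l} Q"
    using bij_betw_trans[OF s h] by (simp add: o_def)
  have "bij_betw (\<lambda>a. if a \<in> {..<k} then f a else h (a - k)) ({..<k} \<union> {k..<k+l}) (P \<union> Q)"
    by (rule bij_betw_disjoint_Un[OF f h']) (use PQ in auto)
  moreover have "{..<k} \<union> {k..<k+l} = {..<k+l}" by auto
  ultimately show ?thesis by simp
qed

lemma pick_facts:
  assumes "finite S" "card S = k"
  shows "\<And>a. a < k \<Longrightarrow> pick S a \<in> S"
    and "\<And>a b. a < k \<Longrightarrow> b < k \<Longrightarrow> pick S a = pick S b \<longleftrightarrow> a = b"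
  using pick_bij'[OF assms] unfolding bij_betw_def inj_on_def by auto

lemma det_zero_col:
  fixes F :: "nat \<Rightarrow> nat \<Rightarrow> 'a::field"
  assumes t: "t < k" and z: "\<And>i. i < k \<Longrightarrow> F (f i) (g t) = 0"
  shows "det (smf F f g k) = 0"
proof -
  let ?x = "\<lambda>j. if j = t then (1::'a) else 0"
  have h: "\<forall>i<k. (\<Sum>j<k. F (f i) (g j) * ?x j) = 0"
  proof (intro allI impI)
    fix i assume i: "i < k"
    have "(\<Sum>j<k. F (f i) (g j) * ?x j) = (\<Sum>j\<in>{t}. F (f i) (g j) * ?x j)"
      by (rule sum.mono_neutral_right) (use t in auto)
    also have "\<dots> = 0" using z[OF i] by simp
    finally show "(\<Sum>j<k. F (f i) (g j) * ?x j) = 0" .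
  qed
  show ?thesis
  proof (rule ccontr)
    assume d: "det (smf F f g k) \<noteq> 0"
    have "\<forall>x. (\<forall>i<k. (\<Sum>j<k. F (f i) (g j) * x j) = 0) \<longrightarrow> (\<forall>j<k. x j = 0)"
      using d by (simp only: det_nonzero_iff_kernel)
    hence "(\<forall>i<k. (\<Sum>j<k. F (f i) (g j) * ?x j) = 0) \<longrightarrow> (\<forall>j<k. ?x j = 0)" by (rule allE)
    hence "\<forall>j<k. ?x j = 0" using h by (rule mp)
    hence "?x t = 0" using t by blast
    thus False by simp
  qed
qed

lemma unit_cols:
  fixes D :: "nat \<Rightarrow> nat \<Rightarrow> 'a::linordered_field"
  assumes ginj: "inj_on g {..<r}" and grng: "g ` {..<r} \<subseteq> {..<n}"
    and unit: "\<And>a b. a < r \<Longrightarrow> b < r \<Longrightarrow> D a (g b) = (if a = b then 1 else 0)"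
    and K: "K \<subseteq> {..<r}" and L: "L \<subseteq> {..<n}" and cK: "card K = k" and cL: "card L = k"
  shows "det (smf D (pick K) (pick L) k) = 0 \<or>
    (\<exists>X. X \<subseteq> {..<n} \<and> card X = r \<and> \<bar>det (smf D (pick K) (pick L) k)\<bar> = \<bar>det (smf D id (pick X) r)\<bar>)"
proof (cases "\<exists>b\<in>{..<r} - K. g b \<in> L")
  case True
  then obtain b where b: "b < r" "b \<notin> K" "g b \<in> L" by blast
  have finL: "finite L" using L finite_subset by blast
  have finK: "finite K" using K finite_subset by blast
  define t where "t = card {a\<in>L. a < g b}"
  have pt: "pick L t = g b" unfolding t_def by (rule pick_card_in_set[OF b(3)])
  have "{a\<in>L. a < g b} \<subset> L" using b(3) by auto
  hence tk: "t < k" unfolding t_def using cL finL by (metis psubset_card_mono)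
  have "det (smf D (pick K) (pick L) k) = 0"
  proof (rule det_zero_col[OF tk])
    fix i assume i: "i < k"
    have "pick K i \<in> K" using pick_facts(1)[OF finK cK i] .
    hence "pick K i < r" "pick K i \<noteq> b" using K b by auto
    thus "D (pick K i) (pick L t) = 0" unfolding pt using unit[OF _ b(1)] by simp
  qed
  thus ?thesis by simp
next
  case False
  define Kc where "Kc = {..<r} - K"
  have finK: "finite K" using K finite_subset by blast
  have finL: "finite L" using L finite_subset by blast
  have finKc: "finite Kc" unfolding Kc_def by simp
  have kr: "k \<le> r" using K cK card_mono[of "{..<r}" K] by simp
  have cKc: "card Kc = r - k" unfolding Kc_def using K cK finK by (simp add: card_Diff_subset)
  have KcL: "\<forall>b\<in>Kc. g b \<notin> L" using False unfolding Kc_def by blast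
  define \<rho> where "\<rho> a = (if a < k then pick K a else pick Kc (a - k))" for a
  define \<sigma> where "\<sigma> t = (if t < k then pick L t else (g \<circ> pick Kc) (t - k))" for t
  define X where "X = L \<union> g ` Kc"
  have rk: "k + (r - k) = r" using kr by simp
  have b\<rho>: "bij_betw \<rho> {..<r} {..<r}"
  proof -
    have "bij_betw \<rho> {..<k + (r-k)} (K \<union> Kc)"
      unfolding \<rho>_def by (rule bij_combine[OF pick_bij'[OF finK cK] pick_bij'[OF finKc cKc]]) (auto simp: Kc_def)
    moreover have "K \<union> Kc = {..<r}" using K unfolding Kc_def by auto
    ultimately show ?thesis using rk by simp
  qed
  have bgKc: "bij_betw (g \<circ> pick Kc) {..<r-k} (g ` Kc)"
  proof (rule bij_betw_trans[OF pick_bij'[OF finKc cKc]])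
    show "bij_betw g Kc (g ` Kc)" using ginj unfolding Kc_def
      by (meson Diff_subset inj_on_imp_bij_betw inj_on_subset)
  qed
  have b\<sigma>: "bij_betw \<sigma> {..<r} X"
  proof -
    have "bij_betw \<sigma> {..<k + (r-k)} (L \<union> g ` Kc)"
      unfolding \<sigma>_def by (rule bij_combine[OF pick_bij'[OF finL cL] bgKc]) (use KcL in auto)
    thus ?thesis using rk unfolding X_def by simp
  qed
  have cX: "card X = r" using bij_betw_same_card[OF b\<sigma>] by simp
  have finX: "finite X" unfolding X_def using finL finKc by simp
  have Xn: "X \<subseteq> {..<n}" unfolding X_def Kc_def using L grng by auto
  have e1: "\<bar>det (smf D \<rho> \<sigma> r)\<bar> = \<bar>det (smf D id (pick X) r)\<bar>"
    by (rule det_smf_abs[OF b\<rho> _ b\<sigma> pick_bij'[OF finX cX]]) simp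
  define C where "C = mat (r - k) k (\<lambda>(a,t). D (pick Kc a) (pick L t))"
  have pK: "\<And>a. a < k \<Longrightarrow> pick K a \<in> K" using pick_facts(1)[OF finK cK] .
  have pKc: "\<And>a. a < r - k \<Longrightarrow> pick Kc a \<in> Kc" using pick_facts(1)[OF finKc cKc] .
  have pKci: "\<And>a b. a < r - k \<Longrightarrow> b < r - k \<Longrightarrow> pick Kc a = pick Kc b \<longleftrightarrow> a = b"
    using pick_facts(2)[OF finKc cKc] .
  have blk: "smf D \<rho> \<sigma> r = four_block_mat (smf D (pick K) (pick L) k) (0\<^sub>m k (r - k)) C (1\<^sub>m (r - k))"
  proof (rule eq_matI)
    fix i j assume "i < dim_row (four_block_mat (smf D (pick K) (pick L) k) (0\<^sub>m k (r - k)) C (1\<^sub>m (r - k)))"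
      "j < dim_col (four_block_mat (smf D (pick K) (pick L) k) (0\<^sub>m k (r - k)) C (1\<^sub>m (r - k)))"
    hence i: "i < r" and j: "j < r" using rk by auto
    show "smf D \<rho> \<sigma> r $$ (i, j) = four_block_mat (smf D (pick K) (pick L) k) (0\<^sub>m k (r - k)) C (1\<^sub>m (r - k)) $$ (i, j)"
    proof (cases "i < k")
      case ik: True
      show ?thesis
      proof (cases "j < k")
        case True thus ?thesis using ik i j rk by (simp add: \<rho>_def \<sigma>_def)
      next
        case jk: False
        have a: "pick K i \<in> K" using pK[OF ik] .
        have b: "pick Kc (j - k) \<in> Kc" using pKc j jk by simp
        have "pick K i \<noteq> pick Kc (j - k)" "pick K i < r" "pick Kc (j - k) < r"
          using a b K unfolding Kc_def by auto
        hence "D (pick K i) (g (pick Kc (j - k))) = 0" using unit by simp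
        thus ?thesis using ik jk i j rk by (simp add: \<rho>_def \<sigma>_def)
      qed
    next
      case ik: False
      show ?thesis
      proof (cases "j < k")
        case True thus ?thesis using ik i j rk by (simp add: \<rho>_def \<sigma>_def C_def)
      next
        case jk: False
        have a: "pick Kc (i - k) \<in> Kc" "pick Kc (j - k) \<in> Kc" using pKc i j ik jk by auto
        hence "pick Kc (i - k) < r" "pick Kc (j - k) < r" unfolding Kc_def by auto
        hence "D (pick Kc (i - k)) (g (pick Kc (j - k))) = (if i - k = j - k then 1 else 0)"
          using unit pKci[of "i - k" "j - k"] i j ik jk by simp
        thus ?thesis using ik jk i j rk by (simp add: \<rho>_def \<sigma>_def)
      qed
    qed
  qed (use rk in auto)
  have "det (smf D \<rho> \<sigma> r) = det (smf D (pick K) (pick L) k) * det (1\<^sub>m (r - k) :: 'a mat)"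
    unfolding blk by (rule det_four_block_mat_upper_right_zero) (auto simp: C_def)
  hence "det (smf D \<rho> \<sigma> r) = det (smf D (pick K) (pick L) k)" by simp
  thus ?thesis using e1 Xn cX by auto
qed




abbreviation Ar :: "int mat \<Rightarrow> nat \<Rightarrow> nat \<Rightarrow> real" where
  "Ar A i j \<equiv> real_of_int (A $$ (i,j))"

lemma sum_pick: "finite J \<Longrightarrow> card J = r \<Longrightarrow> (\<Sum>j\<in>J. h j) = (\<Sum>b<r. h (pick J b))"
  using sum.reindex_bij_betw[OF pick_bij', of J r h] by simp

lemma sum_swap_helper:
  fixes c :: "nat \<Rightarrow> real"
  shows "(\<Sum>j\<in>S. c j * (\<Sum>b<r. D b j * Y b)) = (\<Sum>b<r. Y b * (\<Sum>j\<in>S. c j * D b j))"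
  by (simp add: sum_distrib_left sum.swap[of _ S] mult_ac)

lemma smf_cong_F: "(\<And>i j. i < k \<Longrightarrow> j < k \<Longrightarrow> F (f i) (g j) = G (f i) (g j)) \<Longrightarrow> smf F f g k = smf G f g k"
  by (rule eq_matI) auto

lemma det_smf_of_int:
  assumes "I \<subseteq> {..<dim_row A}" "X \<subseteq> {..<dim_col A}" "card I = k" "card X = k"
  shows "det (smf (Ar A) (pick I) (pick X) k) = real_of_int (det (submatrix A I X))"
proof -
  have "submatrix A I X = smf (\<lambda>i j. A $$ (i,j)) (pick I) (pick X) k" by (rule submatrix_smf[OF assms])
  hence "map_mat real_of_int (submatrix A I X) = smf (Ar A) (pick I) (pick X) k" by (simp add: smf_map)
  moreover have "det (map_mat real_of_int (submatrix A I X)) = real_of_int (det (submatrix A I X))"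
    by (rule of_int_hom.hom_det)
  ultimately show ?thesis by simp
qed

lemma indep_finite: "finite {S. cols_indep_real A S}"
proof (rule finite_subset)
  show "{S. cols_indep_real A S} \<subseteq> Pow {..<dim_col A}" by (auto simp: cols_indep_real_def)
qed simp

lemma rank_ge: "cols_indep_real A S \<Longrightarrow> card S \<le> real_rank A"
  unfolding real_rank_def using indep_finite[of A] by (intro Max_ge) auto

lemma rank_attained: "\<exists>S. cols_indep_real A S \<and> card S = real_rank A"
proof -
  have "cols_indep_real A {}" by (simp add: cols_indep_real_def)
  hence "card ` {S. cols_indep_real A S} \<noteq> {}" by blast
  hence "real_rank A \<in> card ` {S. cols_indep_real A S}" unfolding real_rank_def
    using indep_finite[of A] by (intro Max_in) auto
  thus ?thesis by auto
qed

lemma indep_kernel: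
  assumes ind: "cols_indep_real A J" and cJ: "card J = r"
  shows "\<forall>x. (\<forall>i<dim_row A. (\<Sum>b<r. Ar A i (pick J b) * x b) = 0) \<longrightarrow> (\<forall>b<r. x b = 0)"
proof (intro allI impI)
  fix x b assume h: "\<forall>i<dim_row A. (\<Sum>b<r. Ar A i (pick J b) * x b) = 0" and b: "b < r"
  have Jn: "J \<subseteq> {..<dim_col A}" using ind by (simp add: cols_indep_real_def)
  have finJ: "finite J" using Jn finite_subset by blast
  define c where "c j = x (card {a\<in>J. a < j})" for j
  have cp: "\<And>b. b < r \<Longrightarrow> c (pick J b) = x b" unfolding c_def using card_pick[of _ J] cJ by simp
  have "\<forall>i<dim_row A. (\<Sum>j\<in>J. c j * Ar A i j) = 0"
  proof (intro allI impI)
    fix i assume "i < dim_row A"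
    have "(\<Sum>j\<in>J. c j * Ar A i j) = (\<Sum>b<r. c (pick J b) * Ar A i (pick J b))" by (rule sum_pick[OF finJ cJ])
    also have "\<dots> = (\<Sum>b<r. Ar A i (pick J b) * x b)" by (rule sum.cong) (auto simp: cp)
    finally show "(\<Sum>j\<in>J. c j * Ar A i j) = 0" using h \<open>i < dim_row A\<close> by simp
  qed
  hence "\<forall>j\<in>J. c j = 0" using ind unfolding cols_indep_real_def by blast
  moreover have "pick J b \<in> J" using pick_in_set[of b J] cJ b by simp
  ultimately show "x b = 0" using cp[OF b] by simp
qed

lemma exists_good:
  "\<exists>I J. I \<subseteq> {..<dim_row A} \<and> J \<subseteq> {..<dim_col A} \<and> card I = real_rank A \<and> card J = real_rank A
     \<and> det (smf (Ar A) (pick I) (pick J) (real_rank A)) \<noteq> 0"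
proof -
  obtain J where J: "cols_indep_real A J" "card J = real_rank A" using rank_attained by blast
  obtain I where I: "I \<subseteq> {..<dim_row A}" "card I = real_rank A"
    "det (smf (\<lambda>i b. Ar A i (pick J b)) (pick I) id (real_rank A)) \<noteq> 0"
    using row_select[OF indep_kernel[OF J]] by blast
  have "smf (\<lambda>i b. Ar A i (pick J b)) (pick I) id (real_rank A) = smf (Ar A) (pick I) (pick J) (real_rank A)"
    by (rule eq_matI) auto
  moreover have "J \<subseteq> {..<dim_col A}" using J(1) by (simp add: cols_indep_real_def)
  ultimately show ?thesis using I J by metis
qed

lemma int_quot:
  fixes b w :: int
  assumes "b \<in> {-2,-1,1,2}" "\<bar>w\<bar> \<le> 2" "\<bar>b\<bar> = 2 \<longrightarrow> \<bar>w\<bar> \<noteq> 1"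
  shows "\<exists>z. \<bar>z\<bar> \<le> 2 \<and> w = z * b"
proof -
  have "w \<in> {-2,-1,0,1,2}" using assms(2) by auto
  thus ?thesis using assms(1,3)
    by (intro exI[of _ "if \<bar>b\<bar> = 1 then w * b else w div b"]) auto
qed




definition Dm :: "int mat \<Rightarrow> nat set \<Rightarrow> nat \<Rightarrow> nat \<Rightarrow> real" where
  "Dm A J b j = (SOME l. \<forall>i<dim_row A. Ar A i j = (\<Sum>c<card J. l c * Ar A i (pick J c))) b"

definition Dint :: "int mat \<Rightarrow> nat set \<Rightarrow> int mat" where
  "Dint A J = mat (card J) (dim_col A) (\<lambda>(b,j). round (Dm A J b j))"

context
  fixes A :: "int mat" and I J :: "nat set"
  assumes Im: "I \<subseteq> {..<dim_row A}" and Jn: "J \<subseteq> {..<dim_col A}"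
    and cI: "card I = real_rank A" and cJ: "card J = real_rank A"
    and dB: "det (smf (Ar A) (pick I) (pick J) (real_rank A)) \<noteq> 0"
begin

private abbreviation "r \<equiv> real_rank A"

lemma finI: "finite I" using Im finite_subset by blast
lemma finJ: "finite J" using Jn finite_subset by blast

lemma pI: "a < r \<Longrightarrow> pick I a < dim_row A"
  using pick_facts(1)[OF finI cI] Im by auto
lemma pJ: "a < r \<Longrightarrow> pick J a < dim_col A"
  using pick_facts(1)[OF finJ cJ] Jn by auto
lemma pJin: "a < r \<Longrightarrow> pick J a \<in> J"
  using pick_facts(1)[OF finJ cJ] by auto

lemma rowker: "\<forall>x. (\<forall>a<r. (\<Sum>c<r. Ar A (pick I a) (pick J c) * x c) = 0) \<longrightarrow> (\<forall>c<r. x c = 0)"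
  using dB by (simp only: det_nonzero_iff_kernel)

lemma rowker': "(\<And>a. a < r \<Longrightarrow> (\<Sum>c<r. Ar A (pick I a) (pick J c) * x c) = 0) \<Longrightarrow> c < r \<Longrightarrow> x c = 0"
  using rowker by blast

lemma J_indep: "cols_indep_real A J"
  unfolding cols_indep_real_def
proof (intro conjI allI impI ballI)
  show "J \<subseteq> {..<dim_col A}" by (rule Jn)
  fix c j assume h: "\<forall>i<dim_row A. (\<Sum>j\<in>J. c j * Ar A i j) = 0" and j: "j \<in> J"
  define b where "b = card {a\<in>J. a < j}"
  have pb: "pick J b = j" unfolding b_def by (rule pick_card_in_set[OF j])
  have "{a\<in>J. a < j} \<subset> J" using j by auto
  hence br: "b < r" unfolding b_def using cJ finJ by (metis psubset_card_mono)
  have "c (pick J b) = 0"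
  proof (rule rowker'[of "\<lambda>c'. c (pick J c')"])
    fix a assume a: "a < r"
    have "(\<Sum>c'<r. Ar A (pick I a) (pick J c') * c (pick J c')) = (\<Sum>j\<in>J. c j * Ar A (pick I a) j)"
      by (simp add: sum_pick[OF finJ cJ] mult.commute)
    thus "(\<Sum>c'<r. Ar A (pick I a) (pick J c') * c (pick J c')) = 0" using h pI[OF a] by simp
  qed (rule br)
  thus "c j = 0" using pb by simp
qed

lemma col_rep_exists:
  assumes j: "j < dim_col A"
  shows "\<exists>l. \<forall>i<dim_row A. Ar A i j = (\<Sum>c<card J. l c * Ar A i (pick J c))"
proof (cases "j \<in> J")
  case True
  define b where "b = card {a\<in>J. a < j}"
  have pb: "pick J b = j" unfolding b_def by (rule pick_card_in_set[OF True])
  have "{a\<in>J. a < j} \<subset> J" using True by auto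
  hence br: "b < r" unfolding b_def using cJ finJ by (metis psubset_card_mono)
  show ?thesis
  proof (intro exI allI impI)
    fix i assume "i < dim_row A"
    have "(\<Sum>c<card J. (if c = b then 1 else 0) * Ar A i (pick J c)) = (\<Sum>c\<in>{b}. (if c = b then 1 else 0) * Ar A i (pick J c))"
      by (rule sum.mono_neutral_right) (use br cJ in auto)
    also have "\<dots> = Ar A i j" using pb by simp
    finally show "Ar A i j = (\<Sum>c<card J. (if c = b then 1 else 0) * Ar A i (pick J c))" by simp
  qed
next
  case False
  have fin: "finite (insert j J)" using finJ by simp
  have "card (insert j J) = r + 1" using False finJ cJ by simp
  hence "\<not> cols_indep_real A (insert j J)" using rank_ge[of A "insert j J"] by linarith
  moreover have "insert j J \<subseteq> {..<dim_col A}" using j Jn by auto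
  ultimately obtain c where c: "\<forall>i<dim_row A. (\<Sum>j'\<in>insert j J. c j' * Ar A i j') = 0"
    and nz: "\<not> (\<forall>j'\<in>insert j J. c j' = 0)"
    unfolding cols_indep_real_def by blast
  have c2: "\<forall>i<dim_row A. c j * Ar A i j + (\<Sum>j'\<in>J. c j' * Ar A i j') = 0"
    using c False finJ by simp
  have cj: "c j \<noteq> 0"
  proof
    assume "c j = 0"
    hence "\<forall>i<dim_row A. (\<Sum>j'\<in>J. c j' * Ar A i j') = 0" using c2 by simp
    hence "\<forall>j'\<in>J. c j' = 0" using J_indep unfolding cols_indep_real_def by blast
    thus False using nz \<open>c j = 0\<close> by simp
  qed
  show ?thesis
  proof (intro exI allI impI)
    fix i assume i: "i < dim_row A"
    have "(\<Sum>b<card J. (- c (pick J b) / c j) * Ar A i (pick J b)) = - (\<Sum>b<card J. c (pick J b) * Ar A i (pick J b)) / c j"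
      by (simp add: sum_divide_distrib sum_negf)
    also have "(\<Sum>b<card J. c (pick J b) * Ar A i (pick J b)) = (\<Sum>j'\<in>J. c j' * Ar A i j')"
      using sum_pick[OF finJ refl, of "\<lambda>j'. c j' * Ar A i j'"] by simp
    also have "\<dots> = - (c j * Ar A i j)" using c2 i by (simp add: eq_neg_iff_add_eq_0 add.commute)
    also have "- (- (c j * Ar A i j)) / c j = Ar A i j" using cj by simp
    finally show "Ar A i j = (\<Sum>b<card J. (- c (pick J b) / c j) * Ar A i (pick J b))" by (rule sym)
  qed
qed

lemma D_rep:
  assumes j: "j < dim_col A" and i: "i < dim_row A"
  shows "Ar A i j = (\<Sum>c<r. Dm A J c j * Ar A i (pick J c))"
proof -
  have "\<forall>i<dim_row A. Ar A i j = (\<Sum>c<card J. (SOME l. \<forall>i<dim_row A. Ar A i j = (\<Sum>c<card J. l c * Ar A i (pick J c))) c * Ar A i (pick J c))"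
    by (rule someI_ex[OF col_rep_exists[OF j]])
  hence "Ar A i j = (\<Sum>c<card J. Dm A J c j * Ar A i (pick J c))" using i unfolding Dm_def by blast
  thus ?thesis using cJ by simp
qed

lemma rep_unique:
  assumes "\<And>i. i < dim_row A \<Longrightarrow> (\<Sum>c<r. l c * Ar A i (pick J c)) = (\<Sum>c<r. l' c * Ar A i (pick J c))"
    and "c < r"
  shows "l c = l' c"
proof -
  have "(\<lambda>c. l c - l' c) c = 0"
  proof (rule rowker')
    fix a assume a: "a < r"
    have "(\<Sum>c<r. Ar A (pick I a) (pick J c) * (l c - l' c)) =
      (\<Sum>c<r. l c * Ar A (pick I a) (pick J c)) - (\<Sum>c<r. l' c * Ar A (pick I a) (pick J c))"
      by (simp add: sum_subtractf algebra_simps)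
    thus "(\<Sum>c<r. Ar A (pick I a) (pick J c) * (l c - l' c)) = 0" using assms(1)[OF pI[OF a]] by simp
  qed (rule assms(2))
  thus ?thesis by simp
qed

lemma D_unit: "a < r \<Longrightarrow> b < r \<Longrightarrow> Dm A J a (pick J b) = (if a = b then 1 else 0)"
proof (rule rep_unique[of "\<lambda>c. Dm A J c (pick J b)" "\<lambda>c. if c = b then 1 else 0"])
  fix i assume i: "i < dim_row A" and b: "b < r"
  have "(\<Sum>c<r. Dm A J c (pick J b) * Ar A i (pick J c)) = Ar A i (pick J b)"
    using D_rep[OF pJ[OF b] i] by simp
  also have "\<dots> = (\<Sum>c\<in>{b}. (if c = b then 1 else 0) * Ar A i (pick J c))" by simp
  also have "\<dots> = (\<Sum>c<r. (if c = b then 1 else 0) * Ar A i (pick J c))"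
    by (rule sum.mono_neutral_left) (use b in auto)
  finally show "(\<Sum>c<r. Dm A J c (pick J b) * Ar A i (pick J c)) = (\<Sum>c<r. (if c = b then 1 else 0) * Ar A i (pick J c))" .
qed


lemma prod_eq:
  assumes h: "\<And>t. t < r \<Longrightarrow> h t < dim_col A"
  shows "smf (Ar A) (pick I) h r = smf (Ar A) (pick I) (pick J) r * smf (Dm A J) id h r"
proof (rule eq_matI)
  fix a t assume "a < dim_row (smf (Ar A) (pick I) (pick J) r * smf (Dm A J) id h r)"
    "t < dim_col (smf (Ar A) (pick I) (pick J) r * smf (Dm A J) id h r)"
  hence a: "a < r" and t: "t < r" by auto
  have "(smf (Ar A) (pick I) (pick J) r * smf (Dm A J) id h r) $$ (a, t)
     = (\<Sum>c<r. Ar A (pick I a) (pick J c) * Dm A J c (h t))"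
    using a t by (simp add: scalar_prod_def atLeast0LessThan)
  also have "\<dots> = Ar A (pick I a) (h t)"
    using D_rep[OF h[OF t] pI[OF a]] by (simp add: mult.commute)
  finally show "smf (Ar A) (pick I) h r $$ (a, t) = (smf (Ar A) (pick I) (pick J) r * smf (Dm A J) id h r) $$ (a, t)"
    using a t by simp
qed auto

lemma det_prod:
  assumes h: "\<And>t. t < r \<Longrightarrow> h t < dim_col A"
  shows "det (smf (Ar A) (pick I) h r) = det (smf (Ar A) (pick I) (pick J) r) * det (smf (Dm A J) id h r)"
proof -
  have e: "smf (Ar A) (pick I) h r = smf (Ar A) (pick I) (pick J) r * smf (Dm A J) id h r" by (rule prod_eq[OF h])
  have "det (smf (Ar A) (pick I) (pick J) r * smf (Dm A J) id h r) = det (smf (Ar A) (pick I) (pick J) r) * det (smf (Dm A J) id h r)"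
    by (rule det_mult) auto
  thus ?thesis by (simp only: e[symmetric])
qed

lemma D_maxminor:
  assumes bnd: "\<And>X. X \<subseteq> {..<dim_col A} \<Longrightarrow> card X = r \<Longrightarrow>
      \<exists>z::int. \<bar>z\<bar> \<le> 2 \<and> det (smf (Ar A) (pick I) (pick X) r) = of_int z * det (smf (Ar A) (pick I) (pick J) r)"
    and X: "X \<subseteq> {..<dim_col A}" "card X = r"
  shows "\<exists>z::int. \<bar>z\<bar> \<le> 2 \<and> det (smf (Dm A J) id (pick X) r) = of_int z"
proof -
  obtain z :: int where z: "\<bar>z\<bar> \<le> 2" "det (smf (Ar A) (pick I) (pick X) r) = of_int z * det (smf (Ar A) (pick I) (pick J) r)"
    using bnd[OF X] by blast
  have finX: "finite X" using X finite_subset by blast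
  have "\<And>t. t < r \<Longrightarrow> pick X t < dim_col A" using pick_facts(1)[OF finX X(2)] X(1) by auto
  from det_prod[OF this] z(2) have "det (smf (Ar A) (pick I) (pick J) r) * det (smf (Dm A J) id (pick X) r)
     = det (smf (Ar A) (pick I) (pick J) r) * of_int z" by (simp add: mult.commute)
  hence "det (smf (Dm A J) id (pick X) r) = of_int z" using dB by simp
  thus ?thesis using z(1) by blast
qed

lemma D_subdet:
  assumes bnd: "\<And>X. X \<subseteq> {..<dim_col A} \<Longrightarrow> card X = r \<Longrightarrow>
      \<exists>z::int. \<bar>z\<bar> \<le> 2 \<and> det (smf (Ar A) (pick I) (pick X) r) = of_int z * det (smf (Ar A) (pick I) (pick J) r)"
    and K: "K \<subseteq> {..<r}" and L: "L \<subseteq> {..<dim_col A}" and cK: "card K = k" and cL: "card L = k"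
  shows "\<exists>z::int. \<bar>z\<bar> \<le> 2 \<and> det (smf (Dm A J) (pick K) (pick L) k) = of_int z"
proof -
  have inj: "inj_on (pick J) {..<r}" using pick_bij'[OF finJ cJ] by (simp add: bij_betw_def)
  have rng: "pick J ` {..<r} \<subseteq> {..<dim_col A}" using pJ by auto
  have unit: "\<And>a b. a < r \<Longrightarrow> b < r \<Longrightarrow> Dm A J a (pick J b) = (if a = b then 1 else 0)" by (rule D_unit)
  from unit_cols[OF inj rng unit K L cK cL]
  show ?thesis
  proof
    assume "det (smf (Dm A J) (pick K) (pick L) k) = 0"
    thus ?thesis by (intro exI[of _ 0]) simp
  next
    assume "\<exists>X. X \<subseteq> {..<dim_col A} \<and> card X = r \<and> \<bar>det (smf (Dm A J) (pick K) (pick L) k)\<bar> = \<bar>det (smf (Dm A J) id (pick X) r)\<bar>"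
    then obtain X where X: "X \<subseteq> {..<dim_col A}" "card X = r"
      and e: "\<bar>det (smf (Dm A J) (pick K) (pick L) k)\<bar> = \<bar>det (smf (Dm A J) id (pick X) r)\<bar>" by blast
    obtain z :: int where z: "\<bar>z\<bar> \<le> 2" "det (smf (Dm A J) id (pick X) r) = of_int z"
      using D_maxminor[OF bnd X] by blast
    have "det (smf (Dm A J) (pick K) (pick L) k) = of_int z \<or> det (smf (Dm A J) (pick K) (pick L) k) = of_int (- z)"
      using e z(2) by (auto simp: abs_eq_iff)
    thus ?thesis using z(1) by (metis abs_minus_cancel)
  qed
qed

lemma pick_single: "pick {b} 0 = b"
  by (simp add: Least_equality)

lemma D_int:
  assumes bnd: "\<And>X. X \<subseteq> {..<dim_col A} \<Longrightarrow> card X = r \<Longrightarrow>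
      \<exists>z::int. \<bar>z\<bar> \<le> 2 \<and> det (smf (Ar A) (pick I) (pick X) r) = of_int z * det (smf (Ar A) (pick I) (pick J) r)"
    and b: "b < r" and j: "j < dim_col A"
  shows "Dm A J b j = of_int (round (Dm A J b j))"
proof -
  obtain z :: int where z: "det (smf (Dm A J) (pick {b}) (pick {j}) 1) = of_int z"
    using D_subdet[OF bnd, of "{b}" "{j}" 1] b j by auto
  have "det (smf (Dm A J) (pick {b}) (pick {j}) 1) = Dm A J b j"
    by (subst det_single) (auto simp: Least_equality)
  thus ?thesis using z by simp
qed


lemma Dint_dims[simp]: "dim_row (Dint A J) = r" "dim_col (Dint A J) = dim_col A"
  using cJ by (auto simp: Dint_def)

context
  assumes bnd: "\<And>X. X \<subseteq> {..<dim_col A} \<Longrightarrow> card X = r \<Longrightarrow>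
      \<exists>z::int. \<bar>z\<bar> \<le> 2 \<and> det (smf (Ar A) (pick I) (pick X) r) = of_int z * det (smf (Ar A) (pick I) (pick J) r)"
begin

lemma Dint_real: "b < r \<Longrightarrow> j < dim_col A \<Longrightarrow> Ar (Dint A J) b j = Dm A J b j"
  using D_int[OF bnd, of b j] cJ by (simp add: Dint_def)

lemma Dint_tot: "totally_Delta_modular 2 (Dint A J)"
  unfolding totally_Delta_modular_def
proof (intro allI ballI)
  fix k KL assume "KL \<in> square_subsets (Dint A J) k"
  then obtain K L where KL: "KL = (K, L)" and K: "K \<subseteq> {..<r}" and L: "L \<subseteq> {..<dim_col A}"
    and cK: "card K = k" and cL: "card L = k"
    unfolding square_subsets_def by auto
  have finK: "finite K" using K finite_subset by blast
  have finL: "finite L" using L finite_subset by blast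
  have "det (smf (Ar (Dint A J)) (pick K) (pick L) k) = real_of_int (det (submatrix (Dint A J) K L))"
    by (rule det_smf_of_int) (use K L cK cL in auto)
  moreover have "smf (Ar (Dint A J)) (pick K) (pick L) k = smf (Dm A J) (pick K) (pick L) k"
  proof (rule smf_cong_F)
    fix i j assume "i < k" "j < k"
    hence "pick K i < r" "pick L j < dim_col A"
      using pick_facts(1)[OF finK cK] pick_facts(1)[OF finL cL] K L by auto
    thus "Ar (Dint A J) (pick K i) (pick L j) = Dm A J (pick K i) (pick L j)" by (rule Dint_real)
  qed
  moreover obtain z :: int where "\<bar>z\<bar> \<le> 2" "det (smf (Dm A J) (pick K) (pick L) k) = of_int z"
    using D_subdet[OF bnd K L cK cL] by blast
  ultimately have "det (submatrix (Dint A J) K L) = z" "\<bar>z\<bar> \<le> 2" by simp_all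
  thus "case KL of (K', L') \<Rightarrow> \<bar>det (submatrix (Dint A J) K' L')\<bar> \<le> 2" unfolding KL by simp
qed

lemma Dint_matroid: "cols_indep_real (Dint A J) S \<longleftrightarrow> cols_indep_real A S"
proof (cases "S \<subseteq> {..<dim_col A}")
  case False thus ?thesis by (simp add: cols_indep_real_def)
next
  case S: True
  have eq: "(\<forall>i<r. (\<Sum>j\<in>S. c j * Ar (Dint A J) i j) = 0) \<longleftrightarrow> (\<forall>i<dim_row A. (\<Sum>j\<in>S. c j * Ar A i j) = 0)" for c
  proof -
    have e1: "(\<Sum>j\<in>S. c j * Ar (Dint A J) b j) = (\<Sum>j\<in>S. c j * Dm A J b j)" if b: "b < r" for b
      by (rule sum.cong) (use S b Dint_real in auto)
    have e2: "(\<Sum>j\<in>S. c j * Ar A i j) = (\<Sum>b<r. Ar A i (pick J b) * (\<Sum>j\<in>S. c j * Dm A J b j))"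
      if i: "i < dim_row A" for i
    proof -
      have "(\<Sum>j\<in>S. c j * Ar A i j) = (\<Sum>j\<in>S. c j * (\<Sum>b<r. Dm A J b j * Ar A i (pick J b)))"
        by (rule sum.cong) (use S D_rep i in auto)
      also have "\<dots> = (\<Sum>b<r. Ar A i (pick J b) * (\<Sum>j\<in>S. c j * Dm A J b j))" by (rule sum_swap_helper)
      finally show ?thesis .
    qed
    show ?thesis
    proof
      assume h: "\<forall>i<r. (\<Sum>j\<in>S. c j * Ar (Dint A J) i j) = 0"
      show "\<forall>i<dim_row A. (\<Sum>j\<in>S. c j * Ar A i j) = 0"
        using h e1 e2 by simp
    next
      assume h: "\<forall>i<dim_row A. (\<Sum>j\<in>S. c j * Ar A i j) = 0"
      have "\<forall>b<r. (\<Sum>j\<in>S. c j * Dm A J b j) = 0"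
      proof (intro allI impI)
        fix b assume b: "b < r"
        show "(\<Sum>j\<in>S. c j * Dm A J b j) = 0"
        proof (rule rowker'[of "\<lambda>b. \<Sum>j\<in>S. c j * Dm A J b j", OF _ b])
          fix a assume a: "a < r"
          show "(\<Sum>c'<r. Ar A (pick I a) (pick J c') * (\<Sum>j\<in>S. c j * Dm A J c' j)) = 0"
            using e2[OF pI[OF a]] h pI[OF a] by simp
        qed
      qed
      thus "\<forall>i<r. (\<Sum>j\<in>S. c j * Ar (Dint A J) i j) = 0" using e1 by simp
    qed
  qed
  show ?thesis unfolding cols_indep_real_def using S eq by simp
qed

end

end




lemma M2_to_Mbar2:
  assumes DM: "Delta_modular 2 A"
  shows "\<exists>D. totally_Delta_modular 2 D \<and> dim_col D = dim_col A \<and> (\<forall>S. cols_indep_real D S \<longleftrightarrow> cols_indep_real A S)"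
proof -
  let ?r = "real_rank A"
  define good where "good I J \<longleftrightarrow> I \<subseteq> {..<dim_row A} \<and> J \<subseteq> {..<dim_col A} \<and> card I = ?r \<and> card J = ?r
     \<and> det (smf (Ar A) (pick I) (pick J) ?r) \<noteq> 0" for I J
  have dm: "\<exists>w::int. \<bar>w\<bar> \<le> 2 \<and> det (smf (Ar A) (pick I) (pick X) ?r) = of_int w"
    if "I \<subseteq> {..<dim_row A}" "X \<subseteq> {..<dim_col A}" "card I = ?r" "card X = ?r" for I X
  proof -
    have "(I, X) \<in> square_subsets A ?r" using that by (simp add: square_subsets_def)
    hence "\<bar>det (submatrix A I X)\<bar> \<le> 2" using DM unfolding Delta_modular_def by auto
    thus ?thesis using det_smf_of_int[OF that] by blast
  qed
  obtain I J where gIJ: "good I J" and P: "\<bar>det (smf (Ar A) (pick I) (pick J) ?r)\<bar> = 2 \<longrightarrow>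
      (\<forall>I' X. I' \<subseteq> {..<dim_row A} \<longrightarrow> X \<subseteq> {..<dim_col A} \<longrightarrow> card I' = ?r \<longrightarrow> card X = ?r \<longrightarrow>
        \<bar>det (smf (Ar A) (pick I') (pick X) ?r)\<bar> \<noteq> 1)"
  proof (cases "\<exists>I J. good I J \<and> \<bar>det (smf (Ar A) (pick I) (pick J) ?r)\<bar> = 1")
    case True
    then obtain I J where "good I J" "\<bar>det (smf (Ar A) (pick I) (pick J) ?r)\<bar> = 1" by blast
    thus ?thesis using that by force
  next
    case False
    obtain I J where "good I J" using exists_good[of A] unfolding good_def by blast
    moreover have "\<forall>I' X. I' \<subseteq> {..<dim_row A} \<longrightarrow> X \<subseteq> {..<dim_col A} \<longrightarrow> card I' = ?r \<longrightarrow> card X = ?r \<longrightarrow>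
        \<bar>det (smf (Ar A) (pick I') (pick X) ?r)\<bar> \<noteq> 1"
    proof (intro allI impI)
      fix I' X assume h: "I' \<subseteq> {..<dim_row A}" "X \<subseteq> {..<dim_col A}" "card I' = ?r" "card X = ?r"
      show "\<bar>det (smf (Ar A) (pick I') (pick X) ?r)\<bar> \<noteq> 1"
      proof (cases "det (smf (Ar A) (pick I') (pick X) ?r) = 0")
        case True thus ?thesis by simp
      next
        case nz: False
        hence "good I' X" using h unfolding good_def by blast
        thus ?thesis using False by blast
      qed
    qed
    ultimately show ?thesis using that by blast
  qed
  have Im: "I \<subseteq> {..<dim_row A}" and Jn: "J \<subseteq> {..<dim_col A}" and cI: "card I = ?r" and cJ: "card J = ?r"
    and dB: "det (smf (Ar A) (pick I) (pick J) ?r) \<noteq> 0" using gIJ unfolding good_def by auto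
  obtain b :: int where b: "\<bar>b\<bar> \<le> 2" "det (smf (Ar A) (pick I) (pick J) ?r) = of_int b"
    using dm[OF Im Jn cI cJ] by blast
  have b0: "b \<noteq> 0" using b(2) dB by auto
  have bset: "b \<in> {-2,-1,1,2}" using b(1) b0 by auto
  have bnd: "\<exists>z::int. \<bar>z\<bar> \<le> 2 \<and> det (smf (Ar A) (pick I) (pick X) ?r) = of_int z * det (smf (Ar A) (pick I) (pick J) ?r)"
    if X: "X \<subseteq> {..<dim_col A}" "card X = ?r" for X
  proof -
    obtain w :: int where w: "\<bar>w\<bar> \<le> 2" "det (smf (Ar A) (pick I) (pick X) ?r) = of_int w"
      using dm[OF Im X(1) cI X(2)] by blast
    have "\<bar>b\<bar> = 2 \<longrightarrow> \<bar>w\<bar> \<noteq> 1"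
    proof
      assume "\<bar>b\<bar> = 2"
      hence "\<bar>det (smf (Ar A) (pick I) (pick J) ?r)\<bar> = 2" using b(2) by simp
      hence "\<bar>det (smf (Ar A) (pick I) (pick X) ?r)\<bar> \<noteq> 1" using P Im X cI by blast
      thus "\<bar>w\<bar> \<noteq> 1" using w(2) by (metis of_int_1 of_int_abs)
    qed
    then obtain z where z: "\<bar>z\<bar> \<le> 2" "w = z * b" using int_quot[OF bset w(1)] by blast
    have "det (smf (Ar A) (pick I) (pick X) ?r) = of_int z * det (smf (Ar A) (pick I) (pick J) ?r)"
      using w(2) b(2) z(2) by simp
    thus ?thesis using z(1) by blast
  qed
  show ?thesis
    using Dint_tot[OF Im Jn cI cJ dB bnd] Dint_dims[OF Im Jn cI cJ dB] Dint_matroid[OF Im Jn cI cJ dB bnd] by blast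
qed

theorem mainTheorem8:
  fixes E :: "'a set" and indep :: "'a set \<Rightarrow> bool"
  shows "in_Mbar 2 E indep \<longleftrightarrow> in_M 2 E indep"
proof
  assume "in_Mbar 2 E indep"
  then obtain A where A: "totally_Delta_modular 2 A" "iso_vector_matroid E indep A" unfolding in_Mbar_def by blast
  have "Delta_modular 2 A" using A(1) unfolding totally_Delta_modular_def Delta_modular_def by blast
  thus "in_M 2 E indep" using A(2) unfolding in_M_def by blast
next
  assume "in_M 2 E indep"
  then obtain A where A: "Delta_modular 2 A" "iso_vector_matroid E indep A" unfolding in_M_def by blast
  obtain D where D: "totally_Delta_modular 2 D" "dim_col D = dim_col A" "\<forall>S. cols_indep_real D S \<longleftrightarrow> cols_indep_real A S"
    using M2_to_Mbar2[OF A(1)] by blast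
  have "iso_vector_matroid E indep D" using A(2) D(2,3) unfolding iso_vector_matroid_def by simp
  thus "in_Mbar 2 E indep" using D(1) unfolding in_Mbar_def by blast
qed


end
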